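(* Let $k$ be a field, $(X,\leq)$ a locally finite preordered set and $C=IC(X)$. For any $v\in X$, $S_v^*\simeq S'_v$ as right $C^*$-modules.
   Context: $(X,\leq)$ is a reflexive transitive relation with all intervals $[x,y]$ finite. $IC(X)$ has $k$-basis $\{e_{x,y}\mid x\leq y\}$, $\Delta(e_{x,y})=\sum_{x\leq z\leq y}e_{x,z}\otimes e_{z,y}$, $\varepsilon(e_{x,y})=\delta_{x,y}$. $x\sim y$ means $x\leq y$ and $y\leq x$. For $v\in X$ with $\sim$-class $\mathcal C$: $S_v=\sum_{y\in\mathcal C}k e_{v,y}$ (a simple right $C$-subcomodule of $C$) and $S'_v=\sum_{y\in\mathcal C}k e_{y,v}$ (a simple left $C$-subcomodule of $C$). $C^*$ is the dual algebra with convolution product $(fg)(c)=\sum f(c_1)g(c_2)$; $C$ is a left $C^*$-module via $c^*\rightharpoonup c=\sum c_1c^*(c_2)$ and a right $C^*$-module via $c\leftharpoonup c^*=\sum c^*(c_1)c_2$. $S_v$ is a left $C^*$-submodule, so $S_v^*$ is a right $C^*$-module via $(f\leftharpoonup c^* )(s)=f(c^*\rightharpoonup s)$; $S'_v$ is a right $C^*$-submodule of $C$. *)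

theory Defs
  imports Main
begin

text \<open>Elements of the incidence coalgebra
C = IC(X) over the field 'k are finitely supported coefficient functions
c :: 'a \<times> 'a \<Rightarrow> 'k with c(x,y) the coefficient of e_{x,y}
(support contained in pairs x \<le> y).\<close>

definition locally_finite_preorder :: "('a \<Rightarrow> 'a \<Rightarrow> bool) \<Rightarrow> bool" where
  "locally_finite_preorder le \<longleftrightarrow>
     reflp le \<and> transp le \<and> (\<forall>x y. finite {z. le x z \<and> le z y})"

definition pre_equiv :: "('a \<Rightarrow> 'a \<Rightarrow> bool) \<Rightarrow> 'a \<Rightarrow> 'a \<Rightarrow> bool" where
  "pre_equiv le x y \<longleftrightarrow> le x y \<and> le y x"

definition interval :: "('a \<Rightarrow> 'a \<Rightarrow> bool) \<Rightarrow> 'a \<Rightarrow> 'a \<Rightarrow> 'a set" where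
  "interval le x y = {z. le x z \<and> le z y}"

definition supp :: "('b \<Rightarrow> 'k::zero) \<Rightarrow> 'b set" where
  "supp c = {p. c p \<noteq> 0}"

definition IC :: "('a \<Rightarrow> 'a \<Rightarrow> bool) \<Rightarrow> ('a \<times> 'a \<Rightarrow> 'k::field) set" where
  "IC le = {c. finite (supp c) \<and> (\<forall>x y. c (x, y) \<noteq> 0 \<longrightarrow> le x y)}"

definition ebasis :: "'a \<Rightarrow> 'a \<Rightarrow> ('a \<times> 'a \<Rightarrow> 'k::field)" where
  "ebasis x y = (\<lambda>p. if p = (x, y) then 1 else 0)"

definition lin_on :: "('b \<Rightarrow> 'k::field) set \<Rightarrow> (('b \<Rightarrow> 'k) \<Rightarrow> 'k) \<Rightarrow> bool" where
  "lin_on A f \<longleftrightarrow> (\<forall>c\<in>A. \<forall>d\<in>A. \<forall>a b. f (\<lambda>p. a * c p + b * d p) = a * f c + b * f d)"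

definition IC_dual :: "('a \<Rightarrow> 'a \<Rightarrow> bool) \<Rightarrow> (('a \<times> 'a \<Rightarrow> 'k::field) \<Rightarrow> 'k) set" where
  "IC_dual le = {\<phi>. lin_on (IC le) \<phi>}"

text \<open>Left action c^* \<rightharpoonup> c = sum c_1 c^*(c_2), with
Delta(e_{x,y}) = sum_{x<=z<=y} e_{x,z} (x) e_{z,y}, extended linearly.\<close>
definition left_act :: "('a \<Rightarrow> 'a \<Rightarrow> bool) \<Rightarrow> (('a \<times> 'a \<Rightarrow> 'k::field) \<Rightarrow> 'k)
    \<Rightarrow> ('a \<times> 'a \<Rightarrow> 'k) \<Rightarrow> ('a \<times> 'a \<Rightarrow> 'k)" where
  "left_act le \<phi> c = (\<lambda>q. \<Sum>p\<in>supp c. \<Sum>z\<in>interval le (fst p) (snd p).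
      c p * \<phi> (ebasis z (snd p)) * ebasis (fst p) z q)"

text \<open>Right action c \<leftharpoonup> c^* = sum c^*(c_1) c_2.\<close>
definition right_act :: "('a \<Rightarrow> 'a \<Rightarrow> bool) \<Rightarrow> ('a \<times> 'a \<Rightarrow> 'k::field)
    \<Rightarrow> (('a \<times> 'a \<Rightarrow> 'k) \<Rightarrow> 'k) \<Rightarrow> ('a \<times> 'a \<Rightarrow> 'k)" where
  "right_act le c \<phi> = (\<lambda>q. \<Sum>p\<in>supp c. \<Sum>z\<in>interval le (fst p) (snd p).
      c p * \<phi> (ebasis (fst p) z) * ebasis z (snd p) q)"

text \<open>S_v = span{e_{v,y} | y ~ v}, S'_v = span{e_{y,v} | y ~ v}.\<close>
definition S_sub :: "('a \<Rightarrow> 'a \<Rightarrow> bool) \<Rightarrow> 'a \<Rightarrow> ('a \<times> 'a \<Rightarrow> 'k::field) set" where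
  "S_sub le v = {c \<in> IC le. \<forall>p. c p \<noteq> 0 \<longrightarrow> fst p = v \<and> pre_equiv le (snd p) v}"

definition S'_sub :: "('a \<Rightarrow> 'a \<Rightarrow> bool) \<Rightarrow> 'a \<Rightarrow> ('a \<times> 'a \<Rightarrow> 'k::field) set" where
  "S'_sub le v = {c \<in> IC le. \<forall>p. c p \<noteq> 0 \<longrightarrow> snd p = v \<and> pre_equiv le (fst p) v}"

text \<open>S_v^*: linear functionals on S_v (extensional: zero off S_v).\<close>
definition S_dual :: "('a \<Rightarrow> 'a \<Rightarrow> bool) \<Rightarrow> 'a \<Rightarrow> (('a \<times> 'a \<Rightarrow> 'k::field) \<Rightarrow> 'k) set" where
  "S_dual le v = {f. lin_on (S_sub le v) f \<and> (\<forall>c. c \<notin> S_sub le v \<longrightarrow> f c = 0)}"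

definition dual_right_act :: "('a \<Rightarrow> 'a \<Rightarrow> bool) \<Rightarrow> 'a \<Rightarrow> (('a \<times> 'a \<Rightarrow> 'k::field) \<Rightarrow> 'k)
    \<Rightarrow> (('a \<times> 'a \<Rightarrow> 'k) \<Rightarrow> 'k) \<Rightarrow> (('a \<times> 'a \<Rightarrow> 'k) \<Rightarrow> 'k)" where
  "dual_right_act le v f \<phi> = (\<lambda>s. if s \<in> S_sub le v then f (left_act le \<phi> s) else 0)"

end

theory Submission
  imports Defs
begin

lemma S_sub_lin:
  assumes "c \<in> S_sub le v" "d \<in> S_sub le v"
  shows "(\<lambda>p. a * c p + b * d p) \<in> S_sub le v"
proof -
  have c: "finite (supp c)" "\<forall>x y. c (x, y) \<noteq> 0 \<longrightarrow> le x y" "\<forall>p. c p \<noteq> 0 \<longrightarrow> fst p = v \<and> pre_equiv le (snd p) v"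
    using assms(1) unfolding S_sub_def IC_def by blast+
  have d: "finite (supp d)" "\<forall>x y. d (x, y) \<noteq> 0 \<longrightarrow> le x y" "\<forall>p. d p \<noteq> 0 \<longrightarrow> fst p = v \<and> pre_equiv le (snd p) v"
    using assms(2) unfolding S_sub_def IC_def by blast+
  have "supp (\<lambda>p. a * c p + b * d p) \<subseteq> supp c \<union> supp d"
    by (auto simp: supp_def)
  then have 1: "finite (supp (\<lambda>p. a * c p + b * d p))" using c(1) d(1) by (meson finite_UnI finite_subset)
  have 2: "\<forall>x y. a * c (x,y) + b * d (x,y) \<noteq> 0 \<longrightarrow> le x y"
  proof (intro allI impI)
    fix x y assume "a * c (x,y) + b * d (x,y) \<noteq> 0"
    then have "c (x,y) \<noteq> 0 \<or> d (x,y) \<noteq> 0" by auto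
    then show "le x y" using c(2) d(2) by blast
  qed
  have 3: "\<forall>p. a * c p + b * d p \<noteq> 0 \<longrightarrow> fst p = v \<and> pre_equiv le (snd p) v"
  proof (intro allI impI)
    fix p assume "a * c p + b * d p \<noteq> 0"
    then have "c p \<noteq> 0 \<or> d p \<noteq> 0" by auto
    then show "fst p = v \<and> pre_equiv le (snd p) v" using c(3) d(3) by blast
  qed
  have "(\<lambda>p. a * c p + b * d p) \<in> IC le" unfolding IC_def using 1 2 by blast
  then show ?thesis unfolding S_sub_def using 3 by blast
qed

lemma zero_S_sub: "(\<lambda>p. 0) \<in> S_sub le v"
  by (auto simp: S_sub_def IC_def supp_def)

lemma ebasis_S_sub:
  assumes "pre_equiv le y v"
  shows "(ebasis v y :: 'a \<times> 'a \<Rightarrow> 'k::field) \<in> S_sub le v"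
proof -
  have "supp (ebasis v y :: _ \<Rightarrow> 'k::field) = {(v,y)}" by (auto simp: supp_def ebasis_def)
  then have "finite (supp (ebasis v y :: _ \<Rightarrow> 'k::field))" by simp
  then show ?thesis using assms by (auto simp: S_sub_def IC_def ebasis_def pre_equiv_def split: if_splits)
qed

lemma lin_sum:
  assumes f: "f \<in> S_dual le v" and F: "finite F" "\<forall>y\<in>F. pre_equiv le y v"
  shows "(\<lambda>q. \<Sum>y\<in>F. a y * ebasis v y q) \<in> S_sub le v \<and>
         f (\<lambda>q. \<Sum>y\<in>F. a y * ebasis v y q) = (\<Sum>y\<in>F. a y * f (ebasis v y))"
  using F
proof (induction F rule: finite_induct)
  case empty
  have lin: "lin_on (S_sub le v) f" using f by (simp add: S_dual_def)
  have "f (\<lambda>p. 0 * (\<lambda>p. 0) p + 0 * (\<lambda>p. 0) p) = 0 * f (\<lambda>p. 0) + 0 * f (\<lambda>p. 0)"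
    by (rule lin[unfolded lin_on_def, rule_format, OF zero_S_sub zero_S_sub])
  then show ?case using zero_S_sub by simp
next
  case (insert x F)
  have lin: "lin_on (S_sub le v) f" using f by (simp add: S_dual_def)
  let ?c = "\<lambda>q. \<Sum>y\<in>F. a y * ebasis v y q"
  have c: "?c \<in> S_sub le v" and fc: "f ?c = (\<Sum>y\<in>F. a y * f (ebasis v y))" using insert by auto
  have e: "ebasis v x \<in> S_sub le v" using insert ebasis_S_sub by auto
  have eq: "(\<lambda>q. \<Sum>y\<in>insert x F. a y * ebasis v y q) = (\<lambda>p. 1 * ?c p + a x * ebasis v x p)"
    using insert by (auto simp: add.commute)
  have "f (\<lambda>p. 1 * ?c p + a x * ebasis v x p) = 1 * f ?c + a x * f (ebasis v x)"
    by (rule lin[unfolded lin_on_def, rule_format, OF c e])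
  moreover have "(\<lambda>p. 1 * ?c p + a x * ebasis v x p) \<in> S_sub le v" by (rule S_sub_lin[OF c e])
  ultimately show ?case using eq fc insert by simp
qed

lemma K_finite:
  assumes "locally_finite_preorder le"
  shows "finite {y. pre_equiv le y v}"
proof -
  have "{y. pre_equiv le y v} \<subseteq> {z. le v z \<and> le z v}" by (auto simp: pre_equiv_def)
  moreover have "finite {z. le v z \<and> le z v}" using assms by (simp add: locally_finite_preorder_def)
  ultimately show ?thesis by (rule finite_subset)
qed

lemma S_sub_expand:
  assumes "s \<in> S_sub le v" "finite K" "K = {y. pre_equiv le y v}"
  shows "s = (\<lambda>q. \<Sum>y\<in>K. s (v,y) * ebasis v y q)"
proof
  fix q :: "'a \<times> 'a"
  obtain a b where q: "q = (a,b)" by fastforce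
  show "s q = (\<Sum>y\<in>K. s (v,y) * ebasis v y q)"
  proof (cases "a = v \<and> b \<in> K")
    case True
    then have "(\<Sum>y\<in>K. s (v,y) * ebasis v y q) = (\<Sum>y\<in>K. if y = b then s (v,y) else 0)"
      by (intro sum.cong) (auto simp: ebasis_def q)
    also have "\<dots> = s (v,b)" using True assms(2) by simp
    finally show ?thesis using True q by simp
  next
    case False
    then have "s q = 0" using assms q unfolding S_sub_def by auto
    moreover have "(\<Sum>y\<in>K. s (v,y) * ebasis v y q) = 0"
      using False q by (intro sum.neutral) (auto simp: ebasis_def)
    ultimately show ?thesis by simp
  qed
qed

lemma dual_expand:
  assumes "locally_finite_preorder le" "f \<in> S_dual le v" "s \<in> S_sub le v"
  shows "f s = (\<Sum>y\<in>{y. pre_equiv le y v}. s (v,y) * f (ebasis v y))"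
proof -
  let ?K = "{y. pre_equiv le y v}"
  have fin: "finite ?K" by (rule K_finite[OF assms(1)])
  have "s = (\<lambda>q. \<Sum>y\<in>?K. s (v,y) * ebasis v y q)" using S_sub_expand[OF assms(3) fin] by simp
  then show ?thesis using lin_sum[OF assms(2) fin, of "\<lambda>y. s (v,y)"] by simp
qed


lemma right_act_formula:
  assumes lf: "locally_finite_preorder le" and fin: "finite K"
    and sp: "\<forall>p. c p \<noteq> 0 \<longrightarrow> snd p = v \<and> fst p \<in> K"
  shows "right_act le c \<phi> (z,w) =
    (if w = v then (\<Sum>y\<in>{y\<in>K. le y z \<and> le z v}. c (y,v) * \<phi> (ebasis y z)) else 0)"
proof -
  define g where "g p = (\<Sum>u\<in>interval le (fst p) (snd p).
      c p * \<phi> (ebasis (fst p) u) * ebasis u (snd p) (z,w))" for p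
  define A where "A = (\<lambda>y. (y,v)) ` K"
  have "right_act le c \<phi> (z,w) = (\<Sum>p\<in>supp c. g p)"
    unfolding right_act_def g_def by simp
  also have "\<dots> = (\<Sum>p\<in>A. g p)"
  proof (rule sum.mono_neutral_left)
    show "finite A" using fin A_def by simp
    show "supp c \<subseteq> A" using sp unfolding supp_def A_def
      by (auto simp: image_iff)
    show "\<forall>i\<in>A - supp c. g i = 0" by (auto simp: g_def supp_def)
  qed
  also have "\<dots> = (\<Sum>y\<in>K. g (y,v))" unfolding A_def
    by (subst sum.reindex) (auto simp: inj_on_def)
  also have "\<dots> = (\<Sum>y\<in>K. if w = v \<and> le y z \<and> le z v then c (y,v) * \<phi> (ebasis y z) else 0)"
  proof (rule sum.cong[OF refl])
    fix y assume "y \<in> K"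
    have fi: "finite (interval le y v)" using lf by (simp add: locally_finite_preorder_def interval_def)
    have "g (y,v) = (\<Sum>u\<in>interval le y v. if u = z then (if w = v then c (y,v) * \<phi> (ebasis y u) else 0) else 0)"
      unfolding g_def by (intro sum.cong) (auto simp: ebasis_def)
    also have "\<dots> = (if z \<in> interval le y v then (if w = v then c (y,v) * \<phi> (ebasis y z) else 0) else 0)"
      using fi by (simp add: sum.delta')
    finally show "g (y,v) = (if w = v \<and> le y z \<and> le z v then c (y,v) * \<phi> (ebasis y z) else 0)"
      by (auto simp: interval_def)
  qed
  also have "\<dots> = (if w = v then (\<Sum>y\<in>{y\<in>K. le y z \<and> le z v}. c (y,v) * \<phi> (ebasis y z)) else 0)"
    using fin by (simp add: sum.inter_filter)
  finally show ?thesis .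
qed

definition Phi :: "('a \<Rightarrow> 'a \<Rightarrow> bool) \<Rightarrow> 'a \<Rightarrow> (('a \<times> 'a \<Rightarrow> 'k::field) \<Rightarrow> 'k) \<Rightarrow> ('a \<times> 'a \<Rightarrow> 'k)" where
  "Phi le v f = (\<lambda>q. if snd q = v \<and> pre_equiv le (fst q) v then f (ebasis v (fst q)) else 0)"

lemma Phi_supp: "\<forall>p. Phi le v f p \<noteq> 0 \<longrightarrow> snd p = v \<and> fst p \<in> {y. pre_equiv le y v}"
  by (auto simp: Phi_def)

lemma Phi_in:
  assumes lf: "locally_finite_preorder le"
  shows "Phi le v f \<in> S'_sub le v"
proof -
  have fin: "finite {y. pre_equiv le y v}" by (rule K_finite[OF lf])
  have "supp (Phi le v f) \<subseteq> (\<lambda>y. (y,v)) ` {y. pre_equiv le y v}"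
    by (auto simp: supp_def Phi_def image_iff split: if_splits)
  then have "finite (supp (Phi le v f))" using fin by (meson finite_imageI finite_subset)
  then show ?thesis by (auto simp: S'_sub_def IC_def Phi_def pre_equiv_def split: if_splits)
qed

lemma Phi_inj:
  assumes lf: "locally_finite_preorder le" and f: "f \<in> S_dual le v" and g: "g \<in> S_dual le v"
    and eq: "Phi le v f = Phi le v g"
  shows "f = g"
proof
  fix s
  show "f s = g s"
  proof (cases "s \<in> S_sub le v")
    case True
    have "\<And>y. pre_equiv le y v \<Longrightarrow> f (ebasis v y) = g (ebasis v y)"
    proof -
      fix y assume "pre_equiv le y v"
      then show "f (ebasis v y) = g (ebasis v y)" using fun_cong[OF eq, of "(y,v)"] by (simp add: Phi_def)
    qed
    then show ?thesis using dual_expand[OF lf f True] dual_expand[OF lf g True] by simp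
  next
    case False
    then show ?thesis using f g by (simp add: S_dual_def)
  qed
qed

lemma Phi_surj:
  fixes c :: "'a \<times> 'a \<Rightarrow> 'k::field"
  assumes lf: "locally_finite_preorder le" and c: "c \<in> S'_sub le v"
  shows "\<exists>f\<in>S_dual le v. Phi le v f = c"
proof -
  let ?K = "{y. pre_equiv le y v}"
  have fin: "finite ?K" by (rule K_finite[OF lf])
  define f where "f s = (if s \<in> S_sub le v then (\<Sum>y\<in>?K. s (v,y) * c (y,v)) else 0)" for s
  have "lin_on (S_sub le v) f"
    unfolding lin_on_def
  proof (intro ballI allI)
    fix s t :: "'a \<times> 'a \<Rightarrow> 'k" and a b :: 'k assume s: "s \<in> S_sub le v" and t: "t \<in> S_sub le v"
    have "(\<lambda>p. a * s p + b * t p) \<in> S_sub le v" by (rule S_sub_lin[OF s t])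
    then show "f (\<lambda>p. a * s p + b * t p) = a * f s + b * f t"
      using s t by (simp add: f_def sum.distrib sum_distrib_left algebra_simps)
  qed
  then have fd: "f \<in> S_dual le v" by (simp add: S_dual_def f_def)
  have "Phi le v f = c"
  proof
    fix q :: "'a \<times> 'a"
    obtain z w where q: "q = (z,w)" by fastforce
    show "Phi le v f q = c q"
    proof (cases "w = v \<and> pre_equiv le z v")
      case True
      have eS: "(ebasis v z :: 'a \<times> 'a \<Rightarrow> 'k) \<in> S_sub le v" by (rule ebasis_S_sub[OF conjunct2[OF True]])
      have "f (ebasis v z) = (\<Sum>y\<in>?K. ebasis v z (v,y) * c (y,v))" using eS by (simp add: f_def)
      also have "\<dots> = (\<Sum>y\<in>?K. (if y = z then c (y,v) else 0))"
        by (rule sum.cong) (auto simp: ebasis_def)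
      also have "\<dots> = c (z,v)" using fin True by simp
      finally show ?thesis using True q by (simp add: Phi_def)
    next
      case False
      then have "c q = 0" using c q unfolding S'_sub_def by auto
      then show ?thesis using False q by (auto simp: Phi_def)
    qed
  qed
  then show ?thesis using fd by blast
qed

lemma Phi_act:
  fixes f :: "('a \<times> 'a \<Rightarrow> 'k::field) \<Rightarrow> 'k"
  assumes lf: "locally_finite_preorder le" and f: "f \<in> S_dual le v"
  shows "Phi le v (dual_right_act le v f \<phi>) = right_act le (Phi le v f) \<phi>"
proof
  fix q :: "'a \<times> 'a"
  let ?K = "{y. pre_equiv le y v}"
  have fin: "finite ?K" by (rule K_finite[OF lf])
  obtain z w where q: "q = (z,w)" by fastforce
  have R: "right_act le (Phi le v f) \<phi> (z,w) =
    (if w = v then (\<Sum>y\<in>{y\<in>?K. le y z \<and> le z v}. Phi le v f (y,v) * \<phi> (ebasis y z)) else 0)"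
    by (rule right_act_formula[OF lf fin Phi_supp])
  show "Phi le v (dual_right_act le v f \<phi>) q = right_act le (Phi le v f) \<phi> q"
  proof (cases "w = v \<and> pre_equiv le z v")
    case True
    have tr: "transp le" using lf by (simp add: locally_finite_preorder_def)
    have eS: "(ebasis v z :: 'a \<times> 'a \<Rightarrow> 'k) \<in> S_sub le v" by (rule ebasis_S_sub[OF conjunct2[OF True]])
    have se: "supp (ebasis v z :: 'a \<times> 'a \<Rightarrow> 'k) = {(v,z)}" by (auto simp: supp_def ebasis_def)
    have la: "left_act le \<phi> (ebasis v z) = (\<lambda>q. \<Sum>u\<in>interval le v z. \<phi> (ebasis u z) * ebasis v u q)"
      unfolding left_act_def se by (simp add: ebasis_def)
    have I: "interval le v z = {y\<in>?K. le y z \<and> le z v}"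
      using True tr unfolding interval_def pre_equiv_def by (auto dest: transpD)
    have fI: "finite (interval le v z)" using I fin by simp
    have pe: "\<forall>y\<in>interval le v z. pre_equiv le y v" using I by simp
    have "dual_right_act le v f \<phi> (ebasis v z) = f (left_act le \<phi> (ebasis v z))"
      using eS by (simp add: dual_right_act_def)
    also have "\<dots> = (\<Sum>u\<in>interval le v z. \<phi> (ebasis u z) * f (ebasis v u))"
      unfolding la using lin_sum[OF f fI pe, of "\<lambda>u. \<phi> (ebasis u z)"] by simp
    also have "\<dots> = (\<Sum>y\<in>{y\<in>?K. le y z \<and> le z v}. Phi le v f (y,v) * \<phi> (ebasis y z))"
      unfolding I by (intro sum.cong) (auto simp: Phi_def mult.commute)
    finally show ?thesis using R True q by (simp add: Phi_def)
  next
    case False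
    have tr: "transp le" using lf by (simp add: locally_finite_preorder_def)
    have E: "{y\<in>?K. le y z \<and> le z v} = {}" if "w = v"
      using False that tr unfolding pre_equiv_def by (auto dest: transpD)
    have Rz: "right_act le (Phi le v f) \<phi> (z,w) = 0" using R E by (cases "w = v") (auto intro!: sum.neutral)
    have L: "Phi le v (dual_right_act le v f \<phi>) (z,w) = 0" using False by (auto simp: Phi_def)
    show ?thesis using L Rz q by simp
  qed
qed


theorem mainTheorem9:
  fixes le :: "'a \<Rightarrow> 'a \<Rightarrow> bool" and v :: 'a
  assumes "locally_finite_preorder le"
  shows "\<exists>\<Phi> :: (('a \<times> 'a \<Rightarrow> 'k::field) \<Rightarrow> 'k) \<Rightarrow> ('a \<times> 'a \<Rightarrow> 'k).
           bij_betw \<Phi> (S_dual le v) (S'_sub le v)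
         \<and> (\<forall>f\<in>S_dual le v. \<forall>g\<in>S_dual le v. \<forall>a b.
              \<Phi> (\<lambda>s. a * f s + b * g s) = (\<lambda>q. a * \<Phi> f q + b * \<Phi> g q))
         \<and> (\<forall>\<phi>\<in>IC_dual le. \<forall>f\<in>S_dual le v.
              \<Phi> (dual_right_act le v f \<phi>) = right_act le (\<Phi> f) \<phi>)"
proof (intro exI[of _ "Phi le v"] conjI ballI allI)
  show "bij_betw (Phi le v) (S_dual le v) (S'_sub le v)"
    unfolding bij_betw_def inj_on_def
    using Phi_inj[OF assms] Phi_in[OF assms] Phi_surj[OF assms] by blast
next
  fix f g :: "('a \<times> 'a \<Rightarrow> 'k) \<Rightarrow> 'k" and a b :: 'k
  show "Phi le v (\<lambda>s. a * f s + b * g s) = (\<lambda>q. a * Phi le v f q + b * Phi le v g q)"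
    by (auto simp: Phi_def)
next
  fix \<phi> f assume "f \<in> S_dual le v"
  then show "Phi le v (dual_right_act le v f \<phi>) = right_act le (Phi le v f) \<phi>"
    by (rule Phi_act[OF assms])
qed

end
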